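(* The stationary distribution $\pi$ of the Markov chain $\mathcal{M}$ with bias parameter $\lambda>0$ is $\pi(\sigma)=\lambda^{t(\sigma)}/Z$ for $\sigma\in\Omega$, where $Z=\sum_{\sigma\in\Omega}\lambda^{t(\sigma)}$.
   Context: Let $\Gamma$ be the triangular lattice. A configuration of $n$ particles is a set of $n$ vertices ("locations") of $\Gamma$, considered up to translation. It is connected if the subgraph induced by occupied locations is connected; a hole is a maximal finite connected set of unoccupied locations; $\Omega$ is the set of connected configurations of $n$ particles with no holes. $t(\sigma)$ is the number of triangular faces of $\Gamma$ with all three vertices occupied. For a location $\ell$, $N(\ell)$ is the set of particles at locations adjacent to $\ell$. For adjacent $\ell,\ell'$, let $\mathbb{S}=N(\ell)\cap N(\ell')$ and $N(\ell\cup\ell')=(N(\ell)\cup N(\ell'))$ minus particles located at $\ell$ or $\ell'$. Property 1: $|\mathbb{S}|\in\{1,2\}$ and every particle in $N(\ell\cup\ell')$ is connected to a particle of $\mathbb{S}$ by a lattice path all of whose vertices are particles of $N(\ell\cup\ell')$. Property 2: $|\mathbb{S}|=0$; each of $\ell,\ell'$ has at least one adjacent particle other than one located at the other location; the particles of $N(\ell)$ not at $\ell'$ are connected by paths within this set; the particles of $N(\ell')$ not at $\ell$ are connected by paths within this set. One step of $\mathcal{M}$ from $\sigma$: choose a particle $P$ uniformly (location $\ell$), a neighbor $\ell'$ of $\ell$ uniformly among six, and $q$ uniform in $(0,1)$. If $\ell'$ is occupied, do nothing. Otherwise let $t$ (resp. $t'$) be the number of triangular faces incident to $\ell$ (resp.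 $\ell'$) with all three vertices occupied when $P$ is at $\ell$ (resp. at $\ell'$); move $P$ to $\ell'$ if (1) $\ell$ does not have exactly five occupied neighbors, (2) $\ell,\ell'$ satisfy Property 1 or 2, and (3) $q<\lambda^{t'-t}$; else do nothing. *)

theory Defs
  imports Complex_Main
begin

text \<open>Locations of the triangular lattice are encoded in axial coordinates as
  pairs of integers; the six neighbours of (x,y) are obtained by adding the six
  direction vectors below.\<close>

type_synonym loc = "int \<times> int"

definition addl :: "loc \<Rightarrow> loc \<Rightarrow> loc" where
  "addl a b = (fst a + fst b, snd a + snd b)"

definition dirs :: "loc set" where
  "dirs = {(1,0), (0,1), (-1,1), (-1,0), (0,-1), (1,-1)}"

definition adj :: "loc \<Rightarrow> loc \<Rightarrow> bool" where
  "adj a b \<longleftrightarrow> (\<exists>d\<in>dirs. b = addl a d)"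

text \<open>Triangular faces: up-triangles and down-triangles.\<close>
definition face :: "loc set \<Rightarrow> bool" where
  "face T \<longleftrightarrow> (\<exists>v. T = {v, addl v (1,0), addl v (0,1)} \<or> T = {v, addl v (1,0), addl v (1,-1)})"

definition path_in :: "loc set \<Rightarrow> loc \<Rightarrow> loc \<Rightarrow> bool" where
  "path_in A = (\<lambda>x y. x \<in> A \<and> y \<in> A \<and> adj x y)\<^sup>*\<^sup>*"

definition lconnected :: "loc set \<Rightarrow> bool" where
  "lconnected A \<longleftrightarrow> (\<forall>a\<in>A. \<forall>b\<in>A. path_in A a b)"

text \<open>A hole is a finite connected component of the unoccupied locations.\<close>
definition no_holes :: "loc set \<Rightarrow> bool" where
  "no_holes S \<longleftrightarrow> (\<forall>x. x \<notin> S \<longrightarrow> infinite {y. path_in (- S) x y})"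

definition tri :: "loc set \<Rightarrow> nat" where
  "tri S = card {T. face T \<and> T \<subseteq> S}"

definition shift :: "loc \<Rightarrow> loc set \<Rightarrow> loc set" where
  "shift v S = (\<lambda>p. addl p v) ` S"

text \<open>A configuration is the translation class of a set of locations.\<close>
definition cls :: "loc set \<Rightarrow> loc set set" where
  "cls S = {shift v S | v. True}"

definition Omega :: "nat \<Rightarrow> loc set set set" where
  "Omega n = {cls S | S. finite S \<and> card S = n \<and> lconnected S \<and> no_holes S}"

definition rep :: "loc set set \<Rightarrow> loc set" where
  "rep \<sigma> = (SOME S. S \<in> \<sigma>)"

definition tcfg :: "loc set set \<Rightarrow> nat" where
  "tcfg \<sigma> = tri (rep \<sigma>)"

definition Nb :: "loc set \<Rightarrow> loc \<Rightarrow> loc set" where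
  "Nb S l = {p \<in> S. adj l p}"

definition property1 :: "loc set \<Rightarrow> loc \<Rightarrow> loc \<Rightarrow> bool" where
  "property1 S l l' \<longleftrightarrow>
     (let C = Nb S l \<inter> Nb S l'; U = (Nb S l \<union> Nb S l') - {l, l'} in
      card C \<in> {1, 2} \<and> (\<forall>p\<in>U. \<exists>s\<in>C. path_in U p s))"

definition property2 :: "loc set \<Rightarrow> loc \<Rightarrow> loc \<Rightarrow> bool" where
  "property2 S l l' \<longleftrightarrow>
     card (Nb S l \<inter> Nb S l') = 0 \<and>
     Nb S l - {l'} \<noteq> {} \<and> Nb S l' - {l} \<noteq> {} \<and>
     lconnected (Nb S l - {l'}) \<and> lconnected (Nb S l' - {l})"

definition moved :: "loc set \<Rightarrow> loc \<Rightarrow> loc \<Rightarrow> loc set" where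
  "moved S l l' = insert l' (S - {l})"

definition tri_at :: "loc set \<Rightarrow> loc \<Rightarrow> nat" where
  "tri_at S l = card {T. face T \<and> l \<in> T \<and> T \<subseteq> S}"

definition move_ok :: "loc set \<Rightarrow> loc \<Rightarrow> loc \<Rightarrow> bool" where
  "move_ok S l l' \<longleftrightarrow> card (Nb S l) \<noteq> 5 \<and> (property1 S l l' \<or> property2 S l l')"

text \<open>Probability that q uniform in (0,1) satisfies q < lambda^(t'-t).\<close>
definition acc :: "real \<Rightarrow> loc set \<Rightarrow> loc \<Rightarrow> loc \<Rightarrow> real" where
  "acc lam S l l' = min 1 (lam powi (int (tri_at (moved S l l') l') - int (tri_at S l)))"

definition ind :: "bool \<Rightarrow> real" where
  "ind b = (if b then 1 else 0)"

text \<open>One-step transition probability from (a representative S of) a configuration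
  to the configuration tau: particle chosen uniformly, direction uniformly among six.\<close>
definition step_prob :: "real \<Rightarrow> loc set \<Rightarrow> loc set set \<Rightarrow> real" where
  "step_prob lam S \<tau> =
     (\<Sum>p\<in>S. \<Sum>d\<in>dirs. (1 / (6 * real (card S))) *
        (let l' = addl p d in
         if l' \<in> S then ind (cls S = \<tau>)
         else if move_ok S p l'
           then acc lam S p l' * ind (cls (moved S p l') = \<tau>)
                + (1 - acc lam S p l') * ind (cls S = \<tau>)
           else ind (cls S = \<tau>)))"

definition Pchain :: "real \<Rightarrow> loc set set \<Rightarrow> loc set set \<Rightarrow> real" where
  "Pchain lam \<sigma> \<tau> = step_prob lam (rep \<sigma>) \<tau>"

definition Zpart :: "real \<Rightarrow> nat \<Rightarrow> real" where
  "Zpart lam n = (\<Sum>\<sigma>\<in>Omega n. lam ^ tcfg \<sigma>)"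

definition piM :: "real \<Rightarrow> nat \<Rightarrow> loc set set \<Rightarrow> real" where
  "piM lam n \<sigma> = lam ^ tcfg \<sigma> / Zpart lam n"

end

theory Submission
  imports Defs
begin


lemma addl_eq_iff: "b = addl a d \<longleftrightarrow> d = (fst b - fst a, snd b - snd a)"
  by (auto simp: addl_def prod_eq_iff)

lemma adj_iff: "adj a b \<longleftrightarrow> (fst b - fst a, snd b - snd a) \<in> dirs"
  unfolding adj_def addl_eq_iff by simp

lemma dirs_neg: "(u, v) \<in> dirs \<Longrightarrow> (-u, -v) \<in> dirs"
  by (auto simp: dirs_def)

lemma adj_sym: "adj a b \<Longrightarrow> adj b a"
  unfolding adj_iff using dirs_neg by fastforce

lemma adj_irrefl: "\<not> adj a a"
  by (auto simp: adj_iff dirs_def)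

lemma adj_nbrs: "adj a b \<longleftrightarrow> b \<in> addl a ` dirs"
  by (auto simp: adj_def)

lemma finite_dirs: "finite dirs" by (simp add: dirs_def)
lemma card_dirs: "card dirs = 6" by (simp add: dirs_def)

lemma inj_addl: "inj (addl a)"
  by (auto simp: inj_def addl_def prod_eq_iff)

lemma card_nbrs: "card (addl a ` dirs) = 6"
  by (simp add: card_image inj_addl[THEN inj_on_subset] card_dirs)

lemma Nb_sub: "Nb S l \<subseteq> addl l ` dirs"
  by (auto simp: Nb_def adj_nbrs)

lemma finite_Nb: "finite (Nb S l)"
  using Nb_sub finite_subset finite_dirs by blast

lemma path_in_refl[simp]: "path_in A x x" by (simp add: path_in_def)

lemma path_in_step: "x \<in> A \<Longrightarrow> y \<in> A \<Longrightarrow> adj x y \<Longrightarrow> path_in A x y"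
  by (simp add: path_in_def r_into_rtranclp)

lemma path_in_trans: "path_in A x y \<Longrightarrow> path_in A y z \<Longrightarrow> path_in A x z"
  unfolding path_in_def by (rule rtranclp_trans)

lemma path_in_sym: "path_in A x y \<Longrightarrow> path_in A y x"
  unfolding path_in_def
proof (induction rule: rtranclp_induct)
  case base then show ?case by simp
next
  case (step y z)
  then show ?case
    by (intro converse_rtranclp_into_rtranclp[of _ z y]) (auto simp: adj_sym)
qed

lemma path_in_mono: "path_in A x y \<Longrightarrow> A \<subseteq> B \<Longrightarrow> path_in B x y"
  unfolding path_in_def
proof (induction rule: rtranclp_induct)
  case base then show ?case by simp
next
  case (step y z)
  then show ?case
    by (intro rtranclp.rtrancl_into_rtrancl[of _ x y z]) auto
qed

lemma path_in_closed:
  assumes "path_in A x y" "x \<in> K" "\<And>k q. k \<in> K \<Longrightarrow> q \<in> A \<Longrightarrow> adj k q \<Longrightarrow> q \<in> K"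
  shows "y \<in> K"
  using assms(1,2) unfolding path_in_def
  by (induction rule: rtranclp_induct) (auto intro: assms(3))

lemma path_in_mem: "path_in A x y \<Longrightarrow> x \<noteq> y \<Longrightarrow> y \<in> A"
  unfolding path_in_def by (induction rule: rtranclp_induct) auto

lemma path_in_mem1: "path_in A x y \<Longrightarrow> x \<noteq> y \<Longrightarrow> x \<in> A"
  using path_in_mem path_in_sym by blast

lemma reroute_aux:
  assumes sub: "A - {z} \<subseteq> B"
    and loc: "\<And>u w. u \<in> A \<Longrightarrow> w \<in> A \<Longrightarrow> adj z u \<Longrightarrow> adj z w \<Longrightarrow> path_in B u w"
    and p: "path_in A a y" and az: "a \<noteq> z"
  shows "(y \<noteq> z \<longrightarrow> path_in B a y) \<and> (y = z \<longrightarrow> (\<forall>w\<in>A. adj z w \<longrightarrow> path_in B a w))"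
  using p unfolding path_in_def[of A]
proof (induction rule: rtranclp_induct)
  case base then show ?case using az by simp
next
  case (step y y')
  then have yA: "y \<in> A" "y' \<in> A" "adj y y'" by auto
  show ?case
  proof (cases "y = z")
    case True
    then show ?thesis using step yA by auto
  next
    case False
    then have IH: "path_in B a y" using step by auto
    show ?thesis
    proof (cases "y' = z")
      case True
      then show ?thesis using IH loc[of y] yA False
        by (metis adj_sym path_in_trans)
    next
      case False
      then have "path_in B y y'" using \<open>y \<noteq> z\<close> yA sub by (intro path_in_step) auto
      then show ?thesis using IH False path_in_trans by blast
    qed
  qed
qed

lemma reroute:
  assumes "A - {z} \<subseteq> B"
    and "\<And>u w. u \<in> A \<Longrightarrow> w \<in> A \<Longrightarrow> adj z u \<Longrightarrow> adj z w \<Longrightarrow> path_in B u w"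
    and "path_in A a y" "a \<noteq> z" "y \<noteq> z"
  shows "path_in B a y"
  using reroute_aux[OF assms(1-4)] assms(5) by blast


definition lauto :: "(loc \<Rightarrow> loc) \<Rightarrow> bool" where
  "lauto f \<longleftrightarrow> bij f \<and> (\<forall>a b. adj (f a) (f b) = adj a b)"

lemma lauto_inj: "lauto f \<Longrightarrow> inj f" by (simp add: lauto_def bij_is_inj)
lemma lauto_adj: "lauto f \<Longrightarrow> adj (f a) (f b) = adj a b" unfolding lauto_def by blast

lemma lauto_inv: "lauto f \<Longrightarrow> lauto (inv f)"
  unfolding lauto_def
  by (metis bij_imp_bij_inv bij_inv_eq_iff)

lemma lauto_comp: assumes "lauto f" "lauto g" shows "lauto (f \<circ> g)"
proof -
  have "bij (f \<circ> g)" using assms by (simp add: lauto_def bij_comp)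
  moreover have "\<forall>a b. adj ((f \<circ> g) a) ((f \<circ> g) b) = adj a b"
    using assms by (simp add: lauto_adj)
  ultimately show ?thesis unfolding lauto_def by blast
qed

lemma inv_image_cancel: "lauto f \<Longrightarrow> inv f ` f ` A = A"
  by (simp add: lauto_inj image_image)

lemma inv_cancel[simp]: "lauto f \<Longrightarrow> inv f (f a) = a"
  by (simp add: lauto_inj)

lemma path_in_image:
  assumes "lauto f" "path_in A a b" shows "path_in (f ` A) (f a) (f b)"
  using assms(2) unfolding path_in_def
proof (induction rule: rtranclp_induct)
  case base then show ?case by simp
next
  case (step y z)
  then show ?case using lauto_adj[OF assms(1)]
    by (intro rtranclp.rtrancl_into_rtrancl[of _ "f a" "f y" "f z"]) auto
qed

lemma path_in_image_iff:
  assumes "lauto f" shows "path_in (f ` A) (f a) (f b) \<longleftrightarrow> path_in A a b"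
proof
  assume "path_in (f ` A) (f a) (f b)"
  from path_in_image[OF lauto_inv[OF assms] this] show "path_in A a b"
    using assms by (simp add: inv_image_cancel)
qed (rule path_in_image[OF assms])

lemma Nb_image: "lauto f \<Longrightarrow> Nb (f ` S) (f l) = f ` Nb S l"
  by (auto simp: Nb_def lauto_adj)

lemma card_image_l: "lauto f \<Longrightarrow> card (f ` A) = card A"
  by (meson card_image inj_on_subset lauto_inj subset_UNIV)

lemma image_Int_l: "lauto f \<Longrightarrow> f ` (A \<inter> B) = f ` A \<inter> f ` B"
  by (simp add: image_Int lauto_inj)
lemma image_diff_l: "lauto f \<Longrightarrow> f ` (A - B) = f ` A - f ` B"
  by (simp add: image_set_diff lauto_inj)

lemma prop1_image:
  assumes f: "lauto f"
  shows "property1 (f ` S) (f l) (f l') \<longleftrightarrow> property1 S l l'"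
proof -
  have C: "Nb (f ` S) (f l) \<inter> Nb (f ` S) (f l') = f ` (Nb S l \<inter> Nb S l')"
    using f by (simp add: Nb_image image_Int_l)
  have U: "(Nb (f ` S) (f l) \<union> Nb (f ` S) (f l')) - {f l, f l'} = f ` ((Nb S l \<union> Nb S l') - {l, l'})"
    using f by (simp add: Nb_image image_diff_l image_Un)
  show ?thesis unfolding property1_def Let_def C U
    using f by (simp add: card_image_l path_in_image_iff)
qed

lemma lconnected_image: "lauto f \<Longrightarrow> lconnected (f ` A) \<longleftrightarrow> lconnected A"
  by (simp add: lconnected_def path_in_image_iff)

lemma prop2_image:
  assumes f: "lauto f"
  shows "property2 (f ` S) (f l) (f l') \<longleftrightarrow> property2 S l l'"
proof -
  have C: "Nb (f ` S) (f l) \<inter> Nb (f ` S) (f l') = f ` (Nb S l \<inter> Nb S l')"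
    using f by (simp add: Nb_image image_Int_l)
  have D1: "Nb (f ` S) (f l) - {f l'} = f ` (Nb S l - {l'})"
    using f by (simp add: Nb_image image_diff_l)
  have D2: "Nb (f ` S) (f l') - {f l} = f ` (Nb S l' - {l})"
    using f by (simp add: Nb_image image_diff_l)
  show ?thesis unfolding property2_def C D1 D2
    using f by (simp add: card_image_l lconnected_image)
qed

lemma compl_image_l: "lauto f \<Longrightarrow> - (f ` S) = f ` (- S)"
  by (simp add: lauto_def bij_image_Compl_eq)

lemma no_holes_image:
  assumes f: "lauto f" shows "no_holes (f ` S) \<longleftrightarrow> no_holes S"
proof -
  have surj: "surj f" using f by (simp add: lauto_def bij_is_surj)
  have eq: "{y. path_in (- (f ` S)) (f x) y} = f ` {y. path_in (- S) x y}" for x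
  proof -
    have "{y. path_in (- (f ` S)) (f x) y} = {y. path_in (f ` (- S)) (f x) (f (inv f y))}"
      using surj by (simp add: compl_image_l[OF f] surj_f_inv_f)
    also have "\<dots> = {y. path_in (- S) x (inv f y)}" using f by (simp add: path_in_image_iff)
    also have "\<dots> = f ` {y. path_in (- S) x y}"
    proof (rule set_eqI, rule iffI)
      fix y assume "y \<in> {y. path_in (- S) x (inv f y)}"
      then show "y \<in> f ` {y. path_in (- S) x y}"
        using surj by (metis (mono_tags, lifting) image_eqI mem_Collect_eq surj_f_inv_f)
    next
      fix y assume "y \<in> f ` {y. path_in (- S) x y}"
      then show "y \<in> {y. path_in (- S) x (inv f y)}" using f by auto
    qed
    finally show ?thesis .
  qed
  have fin: "finite (f ` X) \<longleftrightarrow> finite X" for X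
    by (rule finite_image_iff) (meson inj_on_subset lauto_inj[OF f] subset_UNIV)
  show ?thesis
    unfolding no_holes_def
  proof
    assume H: "\<forall>x. x \<notin> f ` S \<longrightarrow> infinite {y. path_in (- f ` S) x y}"
    show "\<forall>x. x \<notin> S \<longrightarrow> infinite {y. path_in (- S) x y}"
      using H[rule_format, of "f _"] f by (auto simp: eq fin lauto_inj inj_image_mem_iff)
  next
    assume H: "\<forall>x. x \<notin> S \<longrightarrow> infinite {y. path_in (- S) x y}"
    show "\<forall>x. x \<notin> f ` S \<longrightarrow> infinite {y. path_in (- f ` S) x y}"
    proof (intro allI impI)
      fix x assume "x \<notin> f ` S"
      define x0 where "x0 = inv f x"
      have "x = f x0" using surj by (simp add: x0_def surj_f_inv_f)
      moreover have "x0 \<notin> S" using \<open>x \<notin> f ` S\<close> \<open>x = f x0\<close> by auto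
      ultimately show "infinite {y. path_in (- f ` S) x y}" using H[rule_format, of x0] by (simp add: eq fin)
    qed
  qed
qed

lemma moved_image: "lauto f \<Longrightarrow> moved (f ` S) (f l) (f l') = f ` moved S l l'"
  by (simp add: moved_def image_diff_l)

definition tr :: "loc \<Rightarrow> loc \<Rightarrow> loc" where "tr v p = addl p v"

lemma shift_tr: "shift v S = tr v ` S" by (simp add: shift_def tr_def)

lemma tr_diff: "(fst (tr v b) - fst (tr v a), snd (tr v b) - snd (tr v a)) = (fst b - fst a, snd b - snd a)"
  by (simp add: tr_def addl_def)

lemma lauto_tr: "lauto (tr v)"
proof -
  have "bij (tr v)"
    by (rule o_bij[where g="tr (- fst v, - snd v)"]) (auto simp: tr_def addl_def fun_eq_iff)
  then show ?thesis unfolding lauto_def adj_iff tr_diff by blast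
qed

definition rot :: "loc \<Rightarrow> loc" where "rot p = (- snd p, fst p + snd p)"

lemma rot_dirs: "(x, y) \<in> dirs \<longleftrightarrow> rot (x,y) \<in> dirs"
  by (auto simp: rot_def dirs_def)

lemma rot_diff: "(fst (rot b) - fst (rot a), snd (rot b) - snd (rot a)) = rot (fst b - fst a, snd b - snd a)"
  by (simp add: rot_def)

lemma lauto_rot: "lauto rot"
proof -
  have "bij rot"
    by (rule o_bij[where g="\<lambda>p. (fst p + snd p, - fst p)"]) (auto simp: rot_def fun_eq_iff)
  then show ?thesis unfolding lauto_def adj_iff rot_diff rot_dirs[symmetric] by blast
qed

lemma lauto_id: "lauto id"
  unfolding lauto_def by simp

lemma lauto_pow: "lauto f \<Longrightarrow> lauto (f ^^ k)"
  by (induction k) (auto simp: lauto_id lauto_comp)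

lemma normalize_move:
  assumes "d \<in> dirs"
  shows "\<exists>f. lauto f \<and> f l = (0,0) \<and> f (addl l d) = (1,0)"
proof -
  let ?t = "tr (- fst l, - snd l)"
  have t0: "?t l = (0,0)" and t1: "?t (addl l d) = d" by (auto simp: tr_def addl_def)
  have "\<exists>k. (rot ^^ k) d = (1,0)"
  proof -
    have r: "rot (a,b) = (-b, a+b)" for a b by (simp add: rot_def)
    have "d = (1,0) \<or> d = (0,1) \<or> d = (-1,1) \<or> d = (-1,0) \<or> d = (0,-1) \<or> d = (1,-1)"
      using assms by (simp add: dirs_def)
    then show ?thesis
    proof (elim disjE)
      assume "d = (1,0)" then show ?thesis by (intro exI[of _ 0]) simp
    next
      assume "d = (0,1)" then show ?thesis by (intro exI[of _ 5]) (simp add: numeral_eq_Suc r)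
    next
      assume "d = (-1,1)" then show ?thesis by (intro exI[of _ 4]) (simp add: numeral_eq_Suc r)
    next
      assume "d = (-1,0)" then show ?thesis by (intro exI[of _ 3]) (simp add: numeral_eq_Suc r)
    next
      assume "d = (0,-1)" then show ?thesis by (intro exI[of _ 2]) (simp add: numeral_eq_Suc r)
    next
      assume "d = (1,-1)" then show ?thesis by (intro exI[of _ 1]) (simp add: r)
    qed
  qed
  then obtain k where k: "(rot ^^ k) d = (1,0)" by blast
  have r0: "(rot ^^ k) (0,0) = (0,0)" by (induction k) (auto simp: rot_def)
  show ?thesis
    by (rule exI[of _ "(rot ^^ k) \<circ> ?t"])
       (simp add: lauto_comp lauto_pow lauto_rot lauto_tr t0 t1 k r0)
qed


lemma adj00: "adj (0,0) q \<longleftrightarrow> q \<in> {(1,0),(0,1),(-1,1),(-1,0),(0,-1),(1,-1)}"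
  by (simp add: adj_iff dirs_def)
lemma adj10: "adj (1,0) q \<longleftrightarrow> q \<in> {(2,0),(1,1),(0,1),(0,0),(1,-1),(2,-1)}"
  by (cases q) (simp add: adj_iff dirs_def; arith)

definition ring8 :: "loc set" where
  "ring8 = {(0,1),(1,1),(2,0),(2,-1),(1,-1),(0,-1),(-1,0),(-1,1)}"

lemma C_eq: "Nb S (0,0) \<inter> Nb S (1,0) = {q \<in> {(0,1),(1,-1)}. q \<in> S}"
  unfolding Nb_def adj00 adj10 by (auto simp: prod_eq_iff)

lemma U_eq: "(Nb S (0,0) \<union> Nb S (1,0)) - {(0,0),(1,0)} = {q \<in> ring8. q \<in> S}"
  unfolding Nb_def adj00 adj10 ring8_def by (auto simp: prod_eq_iff)

lemma prop1_run00:
  assumes "property1 S (0,0) (1,0)" "p \<in> K" "p \<in> S" "p \<in> ring8"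
    and "\<forall>k\<in>K. \<forall>q\<in>ring8. q \<in> S \<longrightarrow> adj k q \<longrightarrow> q \<in> K"
    and "(0,1) \<notin> K" "(1,-1) \<notin> K"
  shows False
proof -
  let ?U = "(Nb S (0,0) \<union> Nb S (1,0)) - {(0,0),(1,0)}"
  let ?C = "Nb S (0,0) \<inter> Nb S (1,0)"
  have H: "\<forall>x\<in>?U. \<exists>s\<in>?C. path_in ?U x s" using assms(1) unfolding property1_def Let_def by blast
  have "p \<in> ?U" using assms(3,4) by (simp only: U_eq) simp
  then obtain s where s: "s \<in> ?C" "path_in ?U p s" using H by blast
  have "s \<in> K"
    by (rule path_in_closed[OF s(2) assms(2)]) (use assms(5) in \<open>simp only: U_eq, blast\<close>)
  moreover have "s \<in> {(0,1),(1,-1)}" using s(1) by (simp only: C_eq) blast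
  ultimately show False using assms(6,7) by blast
qed


lemma c_ii: "property1 S (0,0) (1,0) \<Longrightarrow> (0,1) \<notin> S \<Longrightarrow> (1,1) \<in> S \<Longrightarrow> (2,0) \<notin> S \<Longrightarrow> False"
  by (rule prop1_run00[of S "(1,1)" "{(1,1)}"]) (simp_all add: ring8_def adj_iff dirs_def)
lemma c_iii: "property1 S (0,0) (1,0) \<Longrightarrow> (1,1) \<notin> S \<Longrightarrow> (2,0) \<in> S \<Longrightarrow> (2,-1) \<notin> S \<Longrightarrow> False"
  by (rule prop1_run00[of S "(2,0)" "{(2,0)}"]) (simp_all add: ring8_def adj_iff dirs_def)
lemma c_iv: "property1 S (0,0) (1,0) \<Longrightarrow> (2,0) \<notin> S \<Longrightarrow> (2,-1) \<in> S \<Longrightarrow> (1,-1) \<notin> S \<Longrightarrow> False"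
  by (rule prop1_run00[of S "(2,-1)" "{(2,-1)}"]) (simp_all add: ring8_def adj_iff dirs_def)
lemma c_v: "property1 S (0,0) (1,0) \<Longrightarrow> (0,1) \<notin> S \<Longrightarrow> (1,1) \<in> S \<Longrightarrow> (2,0) \<in> S \<Longrightarrow> (2,-1) \<notin> S \<Longrightarrow> False"
  by (rule prop1_run00[of S "(1,1)" "{(1,1),(2,0)}"]) (simp_all add: ring8_def adj_iff dirs_def)
lemma c_vi: "property1 S (0,0) (1,0) \<Longrightarrow> (1,1) \<notin> S \<Longrightarrow> (2,0) \<in> S \<Longrightarrow> (2,-1) \<in> S \<Longrightarrow> (1,-1) \<notin> S \<Longrightarrow> False"
  by (rule prop1_run00[of S "(2,0)" "{(2,0),(2,-1)}"]) (simp_all add: ring8_def adj_iff dirs_def)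
lemma c_i: assumes "property1 S (0,0) (1,0)" shows "(0,1) \<in> S \<or> (1,-1) \<in> S"
proof -
  have "card (Nb S (0,0) \<inter> Nb S (1,0)) \<in> {1,2}" using assms unfolding property1_def Let_def by blast
  then have "Nb S (0,0) \<inter> Nb S (1,0) \<noteq> {}" by auto
  then show ?thesis unfolding C_eq by blast
qed
lemma c_p2a: "property2 S (0,0) (1,0) \<Longrightarrow> (0,1) \<notin> S \<and> (1,-1) \<notin> S"
  unfolding property2_def C_eq by (auto simp: card_insert_if)

lemma c_p2b: assumes "property2 S (0,0) (1,0)" "(1,1) \<in> S" "(2,0) \<notin> S" "(2,-1) \<in> S"
  shows False
proof -
  let ?N = "Nb S (1,0) - {(0,0)}"
  have c: "(0,1) \<notin> S" using c_p2a[OF assms(1)] by blast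
  have lc: "lconnected ?N" using assms(1) unfolding property2_def by blast
  have m: "(1,1) \<in> ?N" "(2,-1) \<in> ?N" using assms(2,4) by (simp_all add: Nb_def adj_iff dirs_def)
  have p: "path_in ?N (1,1) (2,-1)" using lc m unfolding lconnected_def by blast
  have "((2,-1)::loc) \<in> {(1,1)}"
  proof (rule path_in_closed[OF p])
    fix k q assume k: "k \<in> {(1,1)}" and q: "q \<in> ?N" and a: "adj k q"
    from q have "q \<in> S" "adj (1,0) q" "q \<noteq> (0,0)" by (auto simp: Nb_def)
    then show "q \<in> {(1,1)}" using k a c assms(3) unfolding adj10
      by (elim insertE; simp add: adj_iff dirs_def)
  qed simp
  then show False by simp
qed

lemma local_empty:
  fixes S :: "loc set"
  assumes l: "(0,0) \<in> S" and l': "(1,0) \<notin> S"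
    and P: "property1 S (0,0) (1,0) \<or> property2 S (0,0) (1,0)"
    and u: "u \<notin> S" "adj (1,0) u" and w: "w \<notin> S" "adj (1,0) w"
  shows "path_in (- insert (1,0) (S - {(0,0)})) u w"
proof -
  define B where "B = - insert (1,0) (S - {(0,0)})"
  have st: "a \<in> B \<Longrightarrow> b \<in> B \<Longrightarrow> adj a b \<Longrightarrow> path_in B a b" for a b by (rule path_in_step)
  have e1: "(0,1) \<notin> S \<Longrightarrow> path_in B (0,1) (0,0)" by (rule st) (simp_all add: B_def adj_iff dirs_def)
  have e2: "(1,-1) \<notin> S \<Longrightarrow> path_in B (1,-1) (0,0)" by (rule st) (simp_all add: B_def adj_iff dirs_def)
  have e3: "(1,1) \<notin> S \<Longrightarrow> (0,1) \<notin> S \<Longrightarrow> path_in B (1,1) (0,1)" by (rule st) (simp_all add: B_def adj_iff dirs_def)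
  have e4: "(1,1) \<notin> S \<Longrightarrow> (2,0) \<notin> S \<Longrightarrow> path_in B (1,1) (2,0)" by (rule st) (simp_all add: B_def adj_iff dirs_def)
  have e5: "(2,0) \<notin> S \<Longrightarrow> (2,-1) \<notin> S \<Longrightarrow> path_in B (2,0) (2,-1)" by (rule st) (simp_all add: B_def adj_iff dirs_def)
  have e6: "(2,-1) \<notin> S \<Longrightarrow> (1,-1) \<notin> S \<Longrightarrow> path_in B (2,-1) (1,-1)" by (rule st) (simp_all add: B_def adj_iff dirs_def)
  note tr = path_in_trans[of B]
  have h1: "(1,1) \<notin> S \<Longrightarrow> (0,1) \<notin> S \<Longrightarrow> path_in B (1,1) (0,0)" using e1 e3 tr by blast
  have h2: "(1,1) \<notin> S \<Longrightarrow> (2,0) \<notin> S \<Longrightarrow> (2,-1) \<notin> S \<Longrightarrow> (1,-1) \<notin> S \<Longrightarrow> path_in B (1,1) (0,0)"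
    using e4 e5 e6 e2 tr by blast
  have h3: "(2,-1) \<notin> S \<Longrightarrow> (1,-1) \<notin> S \<Longrightarrow> path_in B (2,-1) (0,0)" using e6 e2 tr by blast
  have h4: "(2,-1) \<notin> S \<Longrightarrow> (2,0) \<notin> S \<Longrightarrow> (1,1) \<notin> S \<Longrightarrow> (0,1) \<notin> S \<Longrightarrow> path_in B (2,-1) (0,0)"
    using e5 e4 e3 e1 tr path_in_sym by metis
  have h5: "(2,0) \<notin> S \<Longrightarrow> (1,1) \<notin> S \<Longrightarrow> (0,1) \<notin> S \<Longrightarrow> path_in B (2,0) (0,0)"
    using e4 h1 tr path_in_sym by metis
  have h6: "(2,0) \<notin> S \<Longrightarrow> (2,-1) \<notin> S \<Longrightarrow> (1,-1) \<notin> S \<Longrightarrow> path_in B (2,0) (0,0)"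
    using e5 h3 tr by blast
  have P1c: "property1 S (0,0) (1,0) \<Longrightarrow> (0,1) \<in> S \<or> (1,-1) \<in> S" by (rule c_i)
  note P1x = c_ii[of S] c_iii[of S] c_iv[of S] c_v[of S] c_vi[of S]
  note P2x = c_p2a[of S] c_p2b[of S]
  have uS: "x \<notin> S \<Longrightarrow> adj (1,0) x \<Longrightarrow> x \<in> {(2,0),(1,1),(0,1),(1,-1),(2,-1)}" for x
    using l unfolding adj10 by auto
  show ?thesis
  proof (cases "(0,1) \<in> S \<and> (1,-1) \<in> S")
    case False
    have toL: "path_in B x (0,0)" if "x \<notin> S" "adj (1,0) x" for x
      using uS[OF that] that(1)
    proof (elim insertE)
      assume "x = (2,0)" then show ?thesis using h5 h6 P P1c P1x P2x False that(1) by blast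
    next
      assume "x = (1,1)" then show ?thesis using h1 h2 P P1c P1x P2x False that(1) by blast
    next
      assume "x = (0,1)" then show ?thesis using e1 that(1) by blast
    next
      assume "x = (1,-1)" then show ?thesis using e2 that(1) by blast
    next
      assume "x = (2,-1)" then show ?thesis using h3 h4 P P1c P1x P2x False that(1) by blast
    qed simp
    show ?thesis unfolding B_def[symmetric] using toL[OF u] toL[OF w] path_in_sym path_in_trans by blast
  next
    case True
    then have P1: "property1 S (0,0) (1,0)" using P P2x by blast
    have bu: "u \<in> {(1,1),(2,0),(2,-1)}" using uS[OF u] True u(1) by auto
    have bw: "w \<in> {(1,1),(2,0),(2,-1)}" using uS[OF w] True w(1) by auto
    have toM: "path_in B x (2,0)" if "x \<in> {(1,1),(2,0),(2,-1)}" "x \<notin> S" "(2,0) \<notin> S" for x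
      using that e4 e5 path_in_sym by auto
    show ?thesis
    proof (cases "(2,0) \<in> S")
      case False
      then show ?thesis unfolding B_def[symmetric] using toM[OF bu u(1)] toM[OF bw w(1)] path_in_sym path_in_trans by blast
    next
      case True
      then have "u = w" using bu bw u(1) w(1) P1x(2)[OF P1] by auto
      then show ?thesis by simp
    qed
  qed
qed


locale mv =
  fixes S :: "loc set" and l d :: loc
  assumes fin: "finite S" and conn: "lconnected S" and nh: "no_holes S"
    and lS: "l \<in> S" and d: "d \<in> dirs" and l'S: "addl l d \<notin> S"
    and ok: "move_ok S l (addl l d)"
begin

abbreviation "l' \<equiv> addl l d"
abbreviation "S' \<equiv> moved S l l'"

lemma adj_ll': "adj l l'" using d by (auto simp: adj_def)
lemma l_ne: "l \<noteq> l'"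
proof
  assume "l = l'" then show False using lS l'S by simp
qed

lemma P: "property1 S l l' \<or> property2 S l l'" using ok by (simp add: move_ok_def)

lemma local_gen:
  assumes "u \<notin> S" "w \<notin> S" "adj l' u" "adj l' w"
  shows "path_in (- S') u w"
proof -
  obtain f where f: "lauto f" "f l = (0,0)" "f l' = (1,0)" using normalize_move[OF d] by blast
  have P0: "property1 (f ` S) (0,0) (1,0) \<or> property2 (f ` S) (0,0) (1,0)"
    using P prop1_image[OF f(1)] prop2_image[OF f(1)] f(2,3) by metis
  have inS: "x \<in> f ` S \<longleftrightarrow> x' \<in> S" if "x = f x'" for x x'
    using f(1) that by (simp add: lauto_inj inj_image_mem_iff)
  have "path_in (- insert (1,0) (f ` S - {(0,0)})) (f u) (f w)"
  proof (rule local_empty)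
    show "(0,0) \<in> f ` S" using lS f(2) inS by metis
    show "(1,0) \<notin> f ` S" using l'S f(3) inS by metis
    show "f u \<notin> f ` S" "f w \<notin> f ` S" using assms inS by auto
    show "adj (1,0) (f u)" "adj (1,0) (f w)" using assms f(3) lauto_adj[OF f(1)] by metis+
  qed (rule P0)
  moreover have "- insert (1,0) (f ` S - {(0,0)}) = f ` (- S')"
  proof -
    have "f ` (- S') = - (f ` S')" using compl_image_l[OF f(1)] by simp
    also have "f ` S' = moved (f ` S) (f l) (f l')" using moved_image[OF f(1)] by simp
    finally show ?thesis using f(2,3) by (simp add: moved_def)
  qed
  ultimately show ?thesis using path_in_image_iff[OF f(1)] by metis
qed

lemma nbrs_card5: "card (addl a ` dirs - {b}) = 5" if "adj a b"
  using that card_nbrs[of a] adj_nbrs[of a b] by (simp add: card_Diff_singleton)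

lemma exists_empty_nb: "\<exists>v. adj l v \<and> v \<noteq> l' \<and> v \<notin> S"
proof (rule ccontr)
  assume "\<not> ?thesis"
  then have "addl l ` dirs - {l'} \<subseteq> Nb S l" by (auto simp: Nb_def adj_nbrs)
  moreover have "Nb S l \<subseteq> addl l ` dirs - {l'}" using Nb_sub[of S l] l'S unfolding Nb_def by blast
  ultimately have "Nb S l = addl l ` dirs - {l'}" by blast
  then have "card (Nb S l) = 5" using nbrs_card5[OF adj_ll'] by simp
  then show False using ok by (simp add: move_ok_def)
qed

lemma S'_sub: "- S - {l'} \<subseteq> - S'" by (auto simp: moved_def)

lemma comp_inf:
  assumes "x \<notin> S" "x \<noteq> l'"
  shows "infinite {y. path_in (- S') x y}"
proof -
  have "{y. path_in (- S) x y} - {l'} \<subseteq> {y. path_in (- S') x y}"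
  proof
    fix y assume "y \<in> {y. path_in (- S) x y} - {l'}"
    then show "y \<in> {y. path_in (- S') x y}"
      using reroute[OF S'_sub _ _ assms(2)] local_gen by auto
  qed
  moreover have "infinite {y. path_in (- S) x y}"
    using nh assms(1) unfolding no_holes_def by blast
  then have "infinite ({y. path_in (- S) x y} - {l'})" by simp
  ultimately show ?thesis using finite_subset by blast
qed

lemma no_holes': "no_holes S'"
  unfolding no_holes_def
proof (intro allI impI)
  fix x assume x: "x \<notin> S'"
  show "infinite {y. path_in (- S') x y}"
  proof (cases "x = l")
    case False
    then have "x \<notin> S" "x \<noteq> l'" using x by (auto simp: moved_def)
    then show ?thesis by (rule comp_inf)
  next
    case True
    obtain v where v: "adj l v" "v \<noteq> l'" "v \<notin> S" using exists_empty_nb by blast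
    have "path_in (- S') l v" using v True x by (intro path_in_step) (auto simp: moved_def)
    then have "{y. path_in (- S') v y} \<subseteq> {y. path_in (- S') x y}"
      using True path_in_trans by blast
    then show ?thesis using comp_inf[OF v(3,2)] finite_subset by blast
  qed
qed

lemma nb_conn: "path_in S' u w" if "u \<in> S" "w \<in> S" "adj l u" "adj l w"
proof -
  have uw: "u \<in> Nb S l" "w \<in> Nb S l" using that by (auto simp: Nb_def)
  have ne1: "u \<noteq> l" using that(3) adj_irrefl[of l] by auto
  have ne2: "w \<noteq> l" using that(4) adj_irrefl[of l] by auto
  have ne3: "u \<noteq> l'" using that(1) l'S by auto
  have ne4: "w \<noteq> l'" using that(2) l'S by auto
  note ne = ne1 ne2 ne3 ne4
  show ?thesis
  proof (cases "property1 S l l'")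
    case True
    let ?U = "(Nb S l \<union> Nb S l') - {l, l'}"
    let ?C = "Nb S l \<inter> Nb S l'"
    have H: "\<forall>p\<in>?U. \<exists>s\<in>?C. path_in ?U p s" using True unfolding property1_def Let_def by (rule conjunct2)
    have US: "?U \<subseteq> S'" unfolding moved_def Nb_def by auto
    have toL: "path_in S' p l'" if "p \<in> ?U" for p
    proof -
      have ex: "\<exists>s\<in>?C. path_in ?U p s" using H that by (rule bspec)
      then obtain s where s: "s \<in> ?C" "path_in ?U p s" ..
      have "path_in S' p s" using path_in_mono[OF s(2) US] .
      have sS: "s \<in> S" "adj l s" "adj l' s" using s(1) unfolding Nb_def by auto
      have "s \<noteq> l" using sS(2) adj_irrefl[of l] by auto
      moreover have "path_in S' s l'"
        using sS \<open>s \<noteq> l\<close> adj_sym[OF sS(3)] by (intro path_in_step) (simp_all add: moved_def)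
      ultimately show ?thesis using path_in_trans[OF \<open>path_in S' p s\<close>] by blast
    qed
    have "u \<in> ?U" "w \<in> ?U" using uw ne by auto
    then have "path_in S' u l'" "path_in S' w l'" using toL by simp_all
    then show ?thesis using path_in_trans path_in_sym by metis
  next
    case False
    then have "property2 S l l'" using P by blast
    then have "lconnected (Nb S l - {l'})" unfolding property2_def by blast
    then have "path_in (Nb S l - {l'}) u w" using uw ne unfolding lconnected_def by blast
    moreover have "Nb S l - {l'} \<subseteq> S'" unfolding moved_def Nb_def using adj_irrefl[of l] by auto
    ultimately show ?thesis using path_in_mono by blast
  qed
qed

lemma attach: "\<exists>z. z \<in> S \<and> z \<noteq> l \<and> adj l' z"
proof (cases "property1 S l l'")
  case True
  then have "card (Nb S l \<inter> Nb S l') \<in> {1,2}" unfolding property1_def Let_def by blast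
  then have "Nb S l \<inter> Nb S l' \<noteq> {}" by auto
  then obtain z where "z \<in> Nb S l \<inter> Nb S l'" by blast
  then have "z \<in> S \<and> z \<noteq> l \<and> adj l' z" using adj_irrefl[of l] unfolding Nb_def by auto
  then show ?thesis by blast
next
  case False
  then have "Nb S l' - {l} \<noteq> {}" using P unfolding property2_def by blast
  then show ?thesis by (auto simp: Nb_def)
qed

lemma conn': "lconnected S'"
proof -
  have rr: "path_in S' a b" if "a \<in> S" "b \<in> S" "a \<noteq> l" "b \<noteq> l" for a b
  proof -
    have "path_in S a b" using conn that unfolding lconnected_def by blast
    moreover have "S - {l} \<subseteq> S'" by (auto simp: moved_def)
    ultimately show ?thesis using reroute[of S l S' a b] nb_conn that by blast
  qed
  obtain z where z: "z \<in> S" "z \<noteq> l" "adj l' z" using attach by blast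
  have zl: "path_in S' l' z" using z by (intro path_in_step) (auto simp: moved_def)
  have toz: "path_in S' a l'" if "a \<in> S'" for a
  proof (cases "a = l'")
    case False
    then have "a \<in> S" "a \<noteq> l" using that by (auto simp: moved_def)
    then have "path_in S' a z" using rr[of a z] z by blast
    then show ?thesis using path_in_trans[OF _ path_in_sym[OF zl]] by blast
  qed simp
  show ?thesis unfolding lconnected_def
  proof (intro ballI)
    fix a b assume "a \<in> S'" "b \<in> S'"
    then have "path_in S' a l'" "path_in S' b l'" using toz by simp_all
    then show "path_in S' a b" using path_in_trans path_in_sym by metis
  qed
qed

lemma fin': "finite S'" using fin by (simp add: moved_def)
lemma card': "card S' = card S"
proof -
  have "card S > 0" using fin lS card_gt_0_iff by blast
  then show ?thesis using fin lS l'S by (simp add: moved_def card_insert_if card_Diff_singleton)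
qed

lemma Nb'_l': "Nb S' l' = Nb S l' - {l}"
  using adj_irrefl[of l'] by (auto simp: moved_def Nb_def)
lemma Nb'_l: "Nb S' l = insert l' (Nb S l)"
  using adj_irrefl[of l] adj_ll' by (auto simp: moved_def Nb_def)

lemma not5': "card (Nb S' l') \<noteq> 5"
proof
  assume c: "card (Nb S' l') = 5"
  have sub: "Nb S' l' \<subseteq> addl l' ` dirs - {l}" unfolding Nb'_l' using Nb_sub by blast
  have eq: "Nb S' l' = addl l' ` dirs - {l}"
    by (rule card_subset_eq[OF _ sub]) (simp_all add: c nbrs_card5 adj_sym[OF adj_ll'] finite_dirs)
  have allS: "q \<in> S" if "adj l' q" for q
    using that eq lS unfolding Nb'_l' by (cases "q = l") (auto simp: adj_nbrs Nb_def)
  have "{y. path_in (- S) l' y} \<subseteq> {l'}"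
  proof
    fix y assume "y \<in> {y. path_in (- S) l' y}"
    then have "path_in (- S) l' y" by simp
    then show "y \<in> {l'}" by (rule path_in_closed) (use allS in auto)
  qed
  then have "finite {y. path_in (- S) l' y}" using finite_subset by blast
  then show False using nh l'S unfolding no_holes_def by blast
qed

lemma prop1_sym: "property1 S' l' l \<longleftrightarrow> property1 S l l'"
proof -
  have C: "Nb S' l' \<inter> Nb S' l = Nb S l \<inter> Nb S l'"
    unfolding Nb'_l' Nb'_l using adj_irrefl[of l] adj_irrefl[of l'] by (auto simp: Nb_def)
  have U: "(Nb S' l' \<union> Nb S' l) - {l', l} = (Nb S l \<union> Nb S l') - {l, l'}"
    unfolding Nb'_l' Nb'_l by auto
  show ?thesis unfolding property1_def Let_def C U ..
qed

lemma prop2_sym: "property2 S' l' l \<longleftrightarrow> property2 S l l'"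
proof -
  have C: "Nb S' l' \<inter> Nb S' l = Nb S l \<inter> Nb S l'"
    unfolding Nb'_l' Nb'_l using adj_irrefl[of l] adj_irrefl[of l'] by (auto simp: Nb_def)
  have D1: "Nb S' l' - {l} = Nb S l' - {l}" unfolding Nb'_l' by auto
  have D2: "Nb S' l - {l'} = Nb S l - {l'}" unfolding Nb'_l using adj_irrefl[of l] by (auto simp: Nb_def)
  show ?thesis unfolding property2_def C D1 D2 by blast
qed

lemma ok': "move_ok S' l' l"
  using not5' prop1_sym prop2_sym P by (simp add: move_ok_def)

lemma moved_back: "moved S' l' l = S"
  using lS l'S l_ne by (auto simp: moved_def)

end


definition negl :: "loc \<Rightarrow> loc" where "negl v = (- fst v, - snd v)"

lemma tr_addl: "tr v (addl a e) = addl (tr v a) e"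
  by (simp add: tr_def addl_def)

lemma tr_tr: "tr w (tr v x) = tr (addl v w) x"
  by (simp add: tr_def addl_def)

lemma tr_neg[simp]: "tr (negl v) (tr v x) = x" "tr v (tr (negl v) x) = x"
  by (simp_all add: tr_def addl_def negl_def)

lemma tr_zero[simp]: "tr (0,0) x = x" by (simp add: tr_def addl_def)

lemma inj_tr: "inj (tr v)" using lauto_inj[OF lauto_tr] .

lemma tr_mem[simp]: "tr v x \<in> tr v ` S \<longleftrightarrow> x \<in> S"
  by (simp add: inj_image_mem_iff inj_tr)

lemma face_tr: assumes "face T" shows "face (tr v ` T)"
proof -
  from assms obtain a where "T = {a, addl a (1,0), addl a (0,1)} \<or> T = {a, addl a (1,0), addl a (1,-1)}"
    unfolding face_def by blast
  then show ?thesis unfolding face_def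
    by (intro exI[of _ "tr v a"]) (auto simp: tr_addl)
qed

lemma faces_tr: "{T. face T \<and> P T} = (\<lambda>T. tr v ` T) ` {T. face T \<and> P (tr v ` T)}"
proof
  show "(\<lambda>T. tr v ` T) ` {T. face T \<and> P (tr v ` T)} \<subseteq> {T. face T \<and> P T}"
    using face_tr[of _ v] by auto
next
  show "{T. face T \<and> P T} \<subseteq> (\<lambda>T. tr v ` T) ` {T. face T \<and> P (tr v ` T)}"
  proof
    fix T assume T: "T \<in> {T. face T \<and> P T}"
    have e: "tr v ` tr (negl v) ` T = T" by (simp add: image_image)
    show "T \<in> (\<lambda>T. tr v ` T) ` {T. face T \<and> P (tr v ` T)}"
      using T face_tr[of T "negl v"] e by (intro image_eqI[of _ _ "tr (negl v) ` T"]) auto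
  qed
qed

lemma card_faces_tr: "card {T. face T \<and> P T} = card {T. face T \<and> P (tr v ` T)}"
proof -
  have "inj_on (\<lambda>T. tr v ` T) X" for X
    by (meson inj_image_eq_iff inj_onI inj_tr)
  then show ?thesis by (subst faces_tr[of _ v]) (simp add: card_image)
qed

lemma tri_tr: "tri (tr v ` S) = tri S"
  unfolding tri_def by (subst card_faces_tr[of _ v]) (simp add: inj_image_subset_iff inj_tr)

lemma tri_at_tr: "tri_at (tr v ` S) (tr v l) = tri_at S l"
  unfolding tri_at_def by (subst card_faces_tr[of _ v]) (simp add: inj_image_subset_iff inj_tr)

lemma tri_split:
  assumes "finite X"
  shows "tri X = card {T. face T \<and> T \<subseteq> X - {x}} + tri_at X x"
proof -
  have eq: "{T. face T \<and> T \<subseteq> X} = {T. face T \<and> T \<subseteq> X - {x}} \<union> {T. face T \<and> x \<in> T \<and> T \<subseteq> X}"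
    by auto
  have f1: "finite {T. face T \<and> T \<subseteq> X - {x}}"
    by (rule finite_subset[of _ "Pow X"]) (use assms in auto)
  have f2: "finite {T. face T \<and> x \<in> T \<and> T \<subseteq> X}"
    by (rule finite_subset[of _ "Pow X"]) (use assms in auto)
  show ?thesis unfolding tri_def tri_at_def eq
    by (rule card_Un_disjoint[OF f1 f2]) auto
qed

lemma cls_mem: "Y \<in> cls X \<longleftrightarrow> (\<exists>w. Y = tr w ` X)"
  unfolding cls_def shift_tr by blast

lemma cls_tr: "cls (tr v ` X) = cls X"
proof -
  have "cls (tr v ` X) \<subseteq> cls X"
  proof
    fix Y assume "Y \<in> cls (tr v ` X)"
    then obtain w where w: "Y = tr w ` tr v ` X" unfolding cls_mem by blast
    have "Y = tr (addl v w) ` X" unfolding w by (simp add: image_image tr_tr)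
    then show "Y \<in> cls X" unfolding cls_mem by blast
  qed
  moreover have "cls X \<subseteq> cls (tr v ` X)"
  proof
    fix Y assume "Y \<in> cls X"
    then obtain w where w: "Y = tr w ` X" unfolding cls_mem by blast
    have "Y = tr (addl (negl v) w) ` (tr v ` X)"
      unfolding w by (simp add: image_image tr_tr) (simp add: tr_def addl_def negl_def)
    then show "Y \<in> cls (tr v ` X)" unfolding cls_mem by blast
  qed
  ultimately show ?thesis by blast
qed

lemma self_cls: "X \<in> cls X"
proof -
  have "X = tr (0,0) ` X" by simp
  then show ?thesis unfolding cls_mem by blast
qed

lemma cls_eq_iff: "cls X = cls Y \<longleftrightarrow> (\<exists>w. Y = tr w ` X)"
proof
  assume "cls X = cls Y"
  then have "Y \<in> cls X" using self_cls by blast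
  then show "\<exists>w. Y = tr w ` X" unfolding cls_def shift_tr by blast
next
  assume "\<exists>w. Y = tr w ` X"
  then show "cls X = cls Y" using cls_tr by metis
qed

lemma move_ok_tr: "move_ok (tr v ` S) (tr v p) (tr v q) \<longleftrightarrow> move_ok S p q"
  unfolding move_ok_def
  by (simp add: Nb_image[OF lauto_tr] card_image_l[OF lauto_tr] prop1_image[OF lauto_tr] prop2_image[OF lauto_tr])

lemma moved_tr: "moved (tr v ` S) (tr v p) (tr v q) = tr v ` moved S p q"
  by (rule moved_image[OF lauto_tr])

lemma acc_tr: "acc lam (tr v ` S) (tr v p) (tr v q) = acc lam S p q"
  unfolding acc_def moved_tr by (simp add: tri_at_tr)

lemma step_prob_tr: "step_prob lam (tr v ` S) \<tau> = step_prob lam S \<tau>"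
proof -
  have c: "card (tr v ` S) = card S" by (rule card_image_l[OF lauto_tr])
  have inj: "inj_on (tr v) S" by (rule inj_on_subset[OF inj_tr subset_UNIV])
  show ?thesis
    unfolding step_prob_def c sum.reindex[OF inj] comp_def
    by (intro sum.cong refl) (simp add: tr_addl[symmetric] Let_def move_ok_tr acc_tr moved_tr cls_tr)
qed

lemma sum_fst_tr:
  assumes "finite X"
  shows "(\<Sum>p\<in>tr u ` X. fst p) = (\<Sum>p\<in>X. fst p) + int (card X) * fst u"
    and "(\<Sum>p\<in>tr u ` X. snd p) = (\<Sum>p\<in>X. snd p) + int (card X) * snd u"
  using assms unfolding sum.reindex[OF inj_on_subset[OF inj_tr subset_UNIV]] comp_def
  by (simp_all add: tr_def addl_def sum.distrib)

lemma tr_unique: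
  assumes "finite X" "X \<noteq> {}" "tr u ` X = tr u' ` X"
  shows "u = u'"
proof -
  have c: "int (card X) \<noteq> 0" using assms(1,2) by simp
  have "sum fst X + int (card X) * fst u = sum fst X + int (card X) * fst u'"
    using sum_fst_tr(1)[OF assms(1), of u] sum_fst_tr(1)[OF assms(1), of u'] assms(3) by metis
  moreover have "sum snd X + int (card X) * snd u = sum snd X + int (card X) * snd u'"
    using sum_fst_tr(2)[OF assms(1), of u] sum_fst_tr(2)[OF assms(1), of u'] assms(3) by metis
  ultimately show ?thesis using c by (simp add: prod_eq_iff)
qed


definition good :: "nat \<Rightarrow> loc set \<Rightarrow> bool" where
  "good n X \<longleftrightarrow> finite X \<and> card X = n \<and> lconnected X \<and> no_holes X"

lemma Omega_eq: "Omega n = {cls S | S. good n S}"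
  by (simp add: Omega_def good_def)

lemma good_tr: "good n (tr v ` X) \<longleftrightarrow> good n X"
proof -
  have "finite (tr v ` X) \<longleftrightarrow> finite X" by (rule finite_image_iff[OF inj_on_subset[OF inj_tr subset_UNIV]])
  then show ?thesis unfolding good_def
    by (simp add: card_image_l[OF lauto_tr] lconnected_image[OF lauto_tr] no_holes_image[OF lauto_tr])
qed

lemma rep_mem: "rep (cls X) \<in> cls X"
  unfolding rep_def by (rule someI[of _ X]) (rule self_cls)

lemma rep_tr: "\<exists>w. rep (cls X) = tr w ` X"
  using rep_mem[of X] unfolding cls_def shift_tr by blast

lemma rep_good: assumes "\<sigma> \<in> Omega n" shows "good n (rep \<sigma>)" "cls (rep \<sigma>) = \<sigma>"
proof -
  obtain S where S: "\<sigma> = cls S" "good n S" using assms Omega_eq by auto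
  obtain w where w: "rep \<sigma> = tr w ` S" using rep_tr S(1) by blast
  show "good n (rep \<sigma>)" using S(2) w good_tr by simp
  show "cls (rep \<sigma>) = \<sigma>" using w S(1) cls_tr by simp
qed

lemma good_Omega: "good n X \<Longrightarrow> cls X \<in> Omega n"
  unfolding Omega_eq by blast

lemma Pchain_eq: "cls X = \<sigma> \<Longrightarrow> Pchain lam \<sigma> \<tau> = step_prob lam X \<tau>"
  unfolding Pchain_def using rep_tr[of X] step_prob_tr by metis

lemma tcfg_eq: "cls X = \<sigma> \<Longrightarrow> tcfg \<sigma> = tri X"
  unfolding tcfg_def using rep_tr[of X] tri_tr by metis

lemma good_moved:
  assumes "good n X" "p \<in> X" "d \<in> dirs" "addl p d \<notin> X" "move_ok X p (addl p d)"
  shows "good n (moved X p (addl p d))"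
proof -
  interpret mv X p d using assms unfolding good_def by unfold_locales auto
  show ?thesis using assms(1) fin' card' conn' no_holes' unfolding good_def by simp
qed

lemma relpow_bound: "(a, b) \<in> R ^^ k \<Longrightarrow> R \<subseteq> {(x,y). adj x y} \<Longrightarrow>
    \<bar>fst b - fst a\<bar> \<le> int k \<and> \<bar>snd b - snd a\<bar> \<le> int k"
proof (induction k arbitrary: b)
  case 0 then show ?case by simp
next
  case (Suc k)
  from Suc.prems(1) obtain c where c: "(a, c) \<in> R ^^ k" "(c, b) \<in> R" by auto
  then have "adj c b" using Suc.prems(2) by auto
  then have "\<bar>fst b - fst c\<bar> \<le> 1 \<and> \<bar>snd b - snd c\<bar> \<le> 1"
    unfolding adj_iff dirs_def by auto
  then show ?case using Suc.IH[OF c(1) Suc.prems(2)] by auto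
qed

lemma path_bound:
  assumes "finite A" "path_in A a b"
  shows "\<bar>fst b - fst a\<bar> \<le> int (card A * card A) \<and> \<bar>snd b - snd a\<bar> \<le> int (card A * card A)"
proof -
  let ?R = "{(x, y). x \<in> A \<and> y \<in> A \<and> adj x y}"
  have fR: "finite ?R" by (rule finite_subset[of _ "A \<times> A"]) (use assms(1) in auto)
  have cR: "card ?R \<le> card A * card A"
    using card_mono[of "A \<times> A" ?R] assms(1) by (auto simp: card_cartesian_product)
  have "(a, b) \<in> ?R\<^sup>*" using assms(2) unfolding path_in_def rtranclp_rtrancl_eq by simp
  then obtain k where k: "k \<le> card ?R" "(a, b) \<in> ?R ^^ k"
    using rtrancl_finite_eq_relpow[OF fR] by auto
  have "\<bar>fst b - fst a\<bar> \<le> int k \<and> \<bar>snd b - snd a\<bar> \<le> int k"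
    by (rule relpow_bound[OF k(2)]) auto
  moreover have "int k \<le> int (card A * card A)" using k(1) cR by linarith
  ultimately show ?thesis by linarith
qed

lemma finite_Omega: "finite (Omega n)"
proof -
  define M where "M = int (n * n)"
  define Box where "Box = {-M..M} \<times> {-M..M}"
  have "Omega n \<subseteq> cls ` Pow Box"
  proof
    fix \<sigma> assume "\<sigma> \<in> Omega n"
    then obtain S where S: "\<sigma> = cls S" "good n S" using Omega_eq by auto
    show "\<sigma> \<in> cls ` Pow Box"
    proof (cases "S = {}")
      case True then show ?thesis using S by auto
    next
      case False
      then obtain s where s: "s \<in> S" by blast
      let ?S0 = "tr (negl s) ` S"
      have g0: "good n ?S0" using S(2) good_tr by simp
      have z: "(0,0) \<in> ?S0" using s by (auto simp: image_iff tr_def addl_def negl_def intro!: bexI[of _ s])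
      have "?S0 \<subseteq> Box"
      proof
        fix x assume x: "x \<in> ?S0"
        have "path_in ?S0 (0,0) x" using g0 z x unfolding good_def lconnected_def by blast
        then have "\<bar>fst x\<bar> \<le> M \<and> \<bar>snd x\<bar> \<le> M"
          using path_bound[of ?S0 "(0,0)" x] g0 unfolding good_def M_def by simp
        then show "x \<in> Box" unfolding Box_def by (cases x) auto
      qed
      moreover have "\<sigma> = cls ?S0" using S(1) cls_tr by simp
      ultimately show ?thesis by blast
    qed
  qed
  moreover have "finite (cls ` Pow Box)" unfolding Box_def by simp
  ultimately show ?thesis using finite_subset by blast
qed


context mv begin

lemma weight:
  assumes lam: "lam > 0"
  shows "lam ^ tri S * acc lam S l l' = lam ^ tri S' * acc lam S' l' l"
proof -
  define B where "B = card {T. face T \<and> T \<subseteq> S - {l}}"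
  define a where "a = tri_at S l"
  define b where "b = tri_at S' l'"
  have tS: "tri S = B + a" unfolding B_def a_def by (rule tri_split[OF fin])
  have e: "S' - {l'} = S - {l}" using l'S l_ne by (auto simp: moved_def)
  have tS': "tri S' = B + b" unfolding B_def b_def using tri_split[OF fin', of l'] e by simp
  have acc1: "acc lam S l l' = min 1 (lam powi (int b - int a))" unfolding acc_def a_def b_def ..
  have acc2: "acc lam S' l' l = min 1 (lam powi (int a - int b))"
    unfolding acc_def a_def b_def moved_back ..
  have pw: "lam ^ (B + x) * lam powi (int y - int x) = lam ^ (B + y)" for x y
  proof -
    have "lam ^ (B + x) * lam powi (int y - int x) = lam powi (int (B + x)) * lam powi (int y - int x)"
      by (simp only: power_int_of_nat)
    also have "\<dots> = lam powi (int (B + x) + (int y - int x))"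
      by (rule power_int_add[symmetric]) (use lam in simp)
    also have "int (B + x) + (int y - int x) = int (B + y)" by simp
    finally show ?thesis by (simp only: power_int_of_nat)
  qed
  have pos: "lam ^ n > 0" for n using lam by simp
  have "lam ^ tri S * acc lam S l l' = min (lam ^ (B + a)) (lam ^ (B + b))"
    unfolding tS acc1 using pos[of "B + a"] by (simp add: min_mult_distrib_left pw)
  moreover have "lam ^ tri S' * acc lam S' l' l = min (lam ^ (B + b)) (lam ^ (B + a))"
    unfolding tS' acc2 using pos[of "B + b"] by (simp add: min_mult_distrib_left pw)
  ultimately show ?thesis by (simp add: min.commute)
qed

end

definition mvset :: "loc set \<Rightarrow> loc set set \<Rightarrow> (loc \<times> loc) set" where
  "mvset S \<tau> = {(p,d). p \<in> S \<and> d \<in> dirs \<and> addl p d \<notin> S \<and> move_ok S p (addl p d) \<and> cls (moved S p (addl p d)) = \<tau>}"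

lemma ind_simps[simp]: "ind True = 1" "ind False = 0" by (simp_all add: ind_def)

lemma step_off:
  assumes "finite S" "cls S \<noteq> \<tau>"
  shows "step_prob lam S \<tau> = (1 / (6 * real (card S))) * (\<Sum>a\<in>mvset S \<tau>. acc lam S (fst a) (addl (fst a) (snd a)))"
proof -
  let ?c = "1 / (6 * real (card S))"
  let ?g = "\<lambda>a. acc lam S (fst a) (addl (fst a) (snd a))"
  have "step_prob lam S \<tau> = (\<Sum>p\<in>S. \<Sum>d\<in>dirs. ?c * (if (p,d) \<in> mvset S \<tau> then ?g (p,d) else 0))"
    unfolding step_prob_def
    by (intro sum.cong refl) (use assms(2) in \<open>auto simp: mvset_def Let_def ind_def\<close>)
  also have "\<dots> = ?c * (\<Sum>x\<in>S \<times> dirs. (if x \<in> mvset S \<tau> then ?g x else 0))"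
    by (simp add: sum_distrib_left sum.cartesian_product)
  also have "(\<Sum>x\<in>S \<times> dirs. (if x \<in> mvset S \<tau> then ?g x else 0)) = sum ?g ((S \<times> dirs) \<inter> mvset S \<tau>)"
    by (rule sum.inter_restrict[symmetric]) (simp add: assms(1) finite_dirs)
  also have "(S \<times> dirs) \<inter> mvset S \<tau> = mvset S \<tau>" by (auto simp: mvset_def)
  finally show ?thesis .
qed

definition jm :: "loc set \<Rightarrow> loc set \<Rightarrow> loc \<times> loc \<Rightarrow> loc \<times> loc" where
  "jm S T a = (tr (SOME w. T = tr w ` moved S (fst a) (addl (fst a) (snd a))) (addl (fst a) (snd a)), negl (snd a))"

lemma negl_dirs: "d \<in> dirs \<Longrightarrow> negl d \<in> dirs" by (auto simp: dirs_def negl_def)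
lemma addl_negl: "addl (addl p d) (negl d) = p" by (simp add: addl_def negl_def)
lemma negl_negl[simp]: "negl (negl d) = d" by (simp add: negl_def)

locale jmloc =
  fixes S T :: "loc set" and p d :: loc
  assumes fin: "finite S" and conn: "lconnected S" and nh: "no_holes S"
    and a: "(p, d) \<in> mvset S (cls T)"
begin

lemma mvS: "mv S p d" using fin conn nh a by unfold_locales (auto simp: mvset_def)

sublocale mv S p d by (rule mvS)

definition u where "u = (SOME w. T = tr w ` S')"

lemma T_eq: "T = tr u ` S'"
proof -
  have "cls S' = cls T" using a by (simp add: mvset_def)
  then have "\<exists>w. T = tr w ` S'" by (simp add: cls_eq_iff)
  then show ?thesis unfolding u_def by (rule someI_ex)
qed

lemma jm_eq: "jm S T (p, d) = (tr u l', negl d)"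
  unfolding jm_def u_def by simp

lemma jm_step: "addl (tr u l') (negl d) = tr u p"
  by (simp add: tr_addl[symmetric] addl_negl)

lemma moved_T: "moved T (tr u l') (tr u p) = tr u ` S"
proof -
  have "moved (tr u ` S') (tr u l') (tr u p) = tr u ` S" by (simp only: moved_tr moved_back)
  then show ?thesis by (simp only: T_eq[symmetric])
qed

lemma J1: "jm S T (p, d) \<in> mvset T (cls S)"
proof -
  have "tr u l' \<in> tr u ` S'" by (simp add: moved_def)
  then have 1: "tr u l' \<in> T" by (simp only: T_eq[symmetric])
  have "tr u p \<notin> tr u ` S'" using l_ne by (simp only: tr_mem) (simp add: moved_def)
  then have 2: "tr u p \<notin> T" using T_eq by metis
  have "move_ok (tr u ` S') (tr u l') (tr u p)" unfolding move_ok_tr by (rule ok')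
  then have 3: "move_ok T (tr u l') (tr u p)" by (simp only: T_eq[symmetric])
  have 4: "cls (moved T (tr u l') (tr u p)) = cls S" unfolding moved_T cls_tr ..
  show ?thesis unfolding jm_eq mvset_def jm_step using negl_dirs[OF d] 1 2 3 4 by (simp add: jm_step)
qed

lemma J2: "jm T S (jm S T (p, d)) = (p, d)"
proof -
  define u2 where "u2 = (SOME w. S = tr w ` moved T (tr u l') (addl (tr u l') (negl d)))"
  have j: "jm T S (jm S T (p,d)) = (tr u2 (addl (tr u l') (negl d)), d)"
    unfolding jm_eq by (simp add: jm_def u2_def)
  have u2_alt: "u2 = (SOME w. S = tr w ` tr u ` S)" unfolding u2_def jm_step moved_T ..
  have "S = tr u2 ` tr u ` S"
    unfolding u2_alt by (rule someI[of _ "negl u"]) (simp add: image_image)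
  then have "tr (0,0) ` S = tr (addl u u2) ` S" by (simp add: image_image tr_tr)
  then have "(0,0) = addl u u2" using tr_unique[OF fin] lS by blast
  then have "tr u2 (tr u p) = p" by (metis tr_tr tr_zero)
  then show ?thesis unfolding j jm_step by simp
qed

lemma J3:
  assumes "lam > 0"
  shows "lam ^ tri T * acc lam T (fst (jm S T (p,d))) (addl (fst (jm S T (p,d))) (snd (jm S T (p,d))))
       = lam ^ tri S * acc lam S p (addl p d)"
proof -
  have "lam ^ tri (tr u ` S') * acc lam (tr u ` S') (tr u l') (tr u p) = lam ^ tri S * acc lam S p (addl p d)"
    using weight[OF assms] by (simp add: tri_tr acc_tr)
  then have "lam ^ tri T * acc lam T (tr u l') (tr u p) = lam ^ tri S * acc lam S p (addl p d)"
    by (simp only: T_eq[symmetric])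
  then show ?thesis unfolding jm_eq by (simp add: jm_step)
qed

end


lemma DB:
  assumes lam: "lam > 0" and s: "\<sigma> \<in> Omega n" and t: "\<tau> \<in> Omega n"
  shows "lam ^ tcfg \<sigma> * Pchain lam \<sigma> \<tau> = lam ^ tcfg \<tau> * Pchain lam \<tau> \<sigma>"
proof (cases "\<sigma> = \<tau>")
  case True then show ?thesis by simp
next
  case False
  define S where "S = rep \<sigma>"
  define T where "T = rep \<tau>"
  have gS: "good n S" "cls S = \<sigma>" unfolding S_def using rep_good[OF s] by auto
  have gT: "good n T" "cls T = \<tau>" unfolding T_def using rep_good[OF t] by auto
  have fS: "finite S" "lconnected S" "no_holes S" "card S = n" using gS(1) unfolding good_def by auto
  have fT: "finite T" "lconnected T" "no_holes T" "card T = n" using gT(1) unfolding good_def by auto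
  let ?c = "1 / (6 * real n)"
  let ?g = "\<lambda>a. lam ^ tri S * acc lam S (fst a) (addl (fst a) (snd a))"
  let ?h = "\<lambda>a. lam ^ tri T * acc lam T (fst a) (addl (fst a) (snd a))"
  have L: "lam ^ tcfg \<sigma> * Pchain lam \<sigma> \<tau> = ?c * (\<Sum>a\<in>mvset S (cls T). ?g a)"
    unfolding tcfg_def Pchain_def S_def[symmetric]
    using step_off[OF fS(1), of \<tau> lam] gS(2) gT(2) False fS(4)
    by (simp add: sum_distrib_left)
  have R: "lam ^ tcfg \<tau> * Pchain lam \<tau> \<sigma> = ?c * (\<Sum>a\<in>mvset T (cls S). ?h a)"
    unfolding tcfg_def Pchain_def T_def[symmetric]
    using step_off[OF fT(1), of \<sigma> lam] gS(2) gT(2) False fT(4)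
    by (simp add: sum_distrib_left)
  have "(\<Sum>a\<in>mvset S (cls T). ?g a) = (\<Sum>a\<in>mvset T (cls S). ?h a)"
  proof (rule sum.reindex_bij_witness[where i="jm T S" and j="jm S T"])
    fix a assume a: "a \<in> mvset S (cls T)"
    interpret jmloc S T "fst a" "snd a" using fS a by unfold_locales auto
    show "jm T S (jm S T a) = a" using J2 by simp
    show "jm S T a \<in> mvset T (cls S)" using J1 by simp
    show "?h (jm S T a) = ?g a" using J3[OF lam] by simp
  next
    fix b assume b: "b \<in> mvset T (cls S)"
    interpret jmloc T S "fst b" "snd b" using fT b by unfold_locales auto
    show "jm S T (jm T S b) = b" using J2 by simp
    show "jm T S b \<in> mvset S (cls T)" using J1 by simp
  qed
  then show ?thesis unfolding L R by simp
qed

lemma sum_ind: "finite A \<Longrightarrow> y \<in> A \<Longrightarrow> (\<Sum>\<sigma>\<in>A. ind (y = \<sigma>)) = 1"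
  unfolding ind_def by simp

lemma rowsum:
  assumes n: "n \<ge> 1" and t: "\<tau> \<in> Omega n"
  shows "(\<Sum>\<sigma>\<in>Omega n. Pchain lam \<tau> \<sigma>) = 1"
proof -
  define X where "X = rep \<tau>"
  have gX: "good n X" unfolding X_def using rep_good[OF t] by auto
  have fX: "finite X" "card X = n" using gX unfolding good_def by auto
  let ?c = "1 / (6 * real (card X))"
  define F where "F = (\<lambda>p d \<sigma>. (let l' = addl p d in
         if l' \<in> X then ind (cls X = \<sigma>)
         else if move_ok X p l'
           then acc lam X p l' * ind (cls (moved X p l') = \<sigma>)
                + (1 - acc lam X p l') * ind (cls X = \<sigma>)
           else ind (cls X = \<sigma>)))"
  have fO: "finite (Omega n)" by (rule finite_Omega)
  have cX: "cls X \<in> Omega n" using good_Omega[OF gX] .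
  have inner: "(\<Sum>\<sigma>\<in>Omega n. F p d \<sigma>) = 1" if "p \<in> X" "d \<in> dirs" for p d
  proof (cases "addl p d \<in> X")
    case True then show ?thesis unfolding F_def Let_def using sum_ind[OF fO cX] by simp
  next
    case False
    show ?thesis
    proof (cases "move_ok X p (addl p d)")
      case True
      have "cls (moved X p (addl p d)) \<in> Omega n"
        using good_Omega[OF good_moved[OF gX that(1,2) False True]] .
      then show ?thesis unfolding F_def Let_def using False True sum_ind[OF fO cX] sum_ind[OF fO]
        by (simp add: sum.distrib sum_distrib_left[symmetric])
    next
      case ok: False
      then show ?thesis unfolding F_def Let_def using False sum_ind[OF fO cX] by simp
    qed
  qed
  have "(\<Sum>\<sigma>\<in>Omega n. Pchain lam \<tau> \<sigma>) = (\<Sum>\<sigma>\<in>Omega n. \<Sum>p\<in>X. \<Sum>d\<in>dirs. ?c * F p d \<sigma>)"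
    unfolding Pchain_def step_prob_def F_def X_def ..
  also have "\<dots> = (\<Sum>p\<in>X. \<Sum>d\<in>dirs. ?c * (\<Sum>\<sigma>\<in>Omega n. F p d \<sigma>))"
    by (simp add: sum.swap[of _ "Omega n"] sum_distrib_left)
  also have "\<dots> = (\<Sum>p\<in>X. \<Sum>d\<in>dirs. ?c)" using inner by simp
  also have "\<dots> = 1" using fX n by (simp add: card_dirs)
  finally show ?thesis .
qed

theorem lemma16:
  fixes lam :: real and n :: nat
  assumes "lam > 0" and "n \<ge> 1"
  shows "finite (Omega n) \<and>
         (\<forall>\<tau>\<in>Omega n. (\<Sum>\<sigma>\<in>Omega n. piM lam n \<sigma> * Pchain lam \<sigma> \<tau>) = piM lam n \<tau>)"
proof
  show "finite (Omega n)" by (rule finite_Omega)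
  show "\<forall>\<tau>\<in>Omega n. (\<Sum>\<sigma>\<in>Omega n. piM lam n \<sigma> * Pchain lam \<sigma> \<tau>) = piM lam n \<tau>"
  proof
    fix \<tau> assume t: "\<tau> \<in> Omega n"
    have "(\<Sum>\<sigma>\<in>Omega n. piM lam n \<sigma> * Pchain lam \<sigma> \<tau>)
        = (\<Sum>\<sigma>\<in>Omega n. (lam ^ tcfg \<sigma> * Pchain lam \<sigma> \<tau>) / Zpart lam n)"
      unfolding piM_def by simp
    also have "\<dots> = (\<Sum>\<sigma>\<in>Omega n. (lam ^ tcfg \<tau> * Pchain lam \<tau> \<sigma>) / Zpart lam n)"
      using DB[OF assms(1) _ t] by (intro sum.cong refl) simp
    also have "\<dots> = lam ^ tcfg \<tau> / Zpart lam n * (\<Sum>\<sigma>\<in>Omega n. Pchain lam \<tau> \<sigma>)"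
      by (simp add: sum_distrib_left sum_divide_distrib)
    also have "\<dots> = piM lam n \<tau>" using rowsum[OF assms(2) t] by (simp add: piM_def)
    finally show "(\<Sum>\<sigma>\<in>Omega n. piM lam n \<sigma> * Pchain lam \<sigma> \<tau>) = piM lam n \<tau>" .
  qed
qed


end
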